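(* For every $k\ge 1$ and every $g\in G_k$, we have $g^2\in G_k'$.
   Context: $G_k$ is the subgroup of the automorphism group $B_k\cong\wr_{i=1}^kC_2$ of the binary rooted tree of depth $k$ consisting of automorphisms acting by even permutations on the $2^k$ leaves; $G_k\cong\mathrm{Syl}_2(A_{2^k})$. $G_k'$ is its commutator subgroup. *)

theory Defs
  imports "HOL-Algebra.Algebra" "HOL-Combinatorics.Permutations"
begin

text \<open>The binary rooted tree of depth k: vertices are boolean words of length at most k,
  the root is the empty word, the children of w are w@[False] and w@[True];
  the 2^k leaves are the words of length exactly k.\<close>

definition tree_vertices :: "nat \<Rightarrow> bool list set" where
  "tree_vertices k = {w. length w \<le> k}"

definition tree_leaves :: "nat \<Rightarrow> bool list set" where
  "tree_leaves k = {w. length w = k}"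

definition tree_edge :: "bool list \<Rightarrow> bool list \<Rightarrow> bool" where
  "tree_edge v w \<longleftrightarrow> (\<exists>b. w = v @ [b] \<or> v = w @ [b])"

definition tree_aut :: "nat \<Rightarrow> (bool list \<Rightarrow> bool list) set" where
  "tree_aut k = {g \<in> Bij (tree_vertices k). g [] = [] \<and>
     (\<forall>v\<in>tree_vertices k. \<forall>w\<in>tree_vertices k. tree_edge (g v) (g w) \<longleftrightarrow> tree_edge v w)}"

definition leaf_perm :: "nat \<Rightarrow> (bool list \<Rightarrow> bool list) \<Rightarrow> bool list \<Rightarrow> bool list" where
  "leaf_perm k g = (\<lambda>w. if w \<in> tree_leaves k then g w else w)"

definition B_group :: "nat \<Rightarrow> (bool list \<Rightarrow> bool list) monoid" where
  "B_group k = (BijGroup (tree_vertices k)) \<lparr>carrier := tree_aut k\<rparr>"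

definition G_group :: "nat \<Rightarrow> (bool list \<Rightarrow> bool list) monoid" where
  "G_group k = (BijGroup (tree_vertices k))
      \<lparr>carrier := {g \<in> tree_aut k. evenperm (leaf_perm k g)}\<rparr>"

end

theory Submission
  imports Defs
begin
lemma (in group) sq_lemma:
  assumes h: "h \<in> carrier G" and e: "e \<in> carrier G" and ee: "e \<otimes> e = \<one>"
    and hh: "h \<otimes> h \<in> derived G (carrier G)"
  shows "(h \<otimes> e) \<otimes> (h \<otimes> e) \<in> derived G (carrier G)"
proof -
  define a where "a = h \<otimes> e \<otimes> inv h"
  have a: "a \<in> carrier G" using a_def h e by simp
  have ie: "inv e = e" using inv_equality[OF ee e e] .
  have ia: "inv a = a" unfolding a_def using h e ie by (simp add: inv_mult_group m_assoc)
  have c: "a \<otimes> h \<otimes> inv a \<otimes> inv h \<in> derived G (carrier G)"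
    unfolding derived_def by (rule generate.incl) (use a h in blast)
  have eq: "(h \<otimes> e) \<otimes> (h \<otimes> e) = (a \<otimes> h \<otimes> inv a \<otimes> inv h) \<otimes> (h \<otimes> h)"
  proof -
    have c1: "\<And>x. x \<in> carrier G \<Longrightarrow> inv h \<otimes> (h \<otimes> x) = x"
      using h by (simp add: m_assoc[symmetric])
    show ?thesis unfolding ia unfolding a_def using h e by (simp add: m_assoc c1)
  qed
  show ?thesis unfolding eq using c hh unfolding derived_def by (rule generate.eng)
qed
lemma fin_vertices: "finite (tree_vertices k)"
proof -
  have "finite {xs::bool list. set xs \<subseteq> UNIV \<and> length xs \<le> k}"
    by (rule finite_lists_length_le) simp
  thus ?thesis by (simp add: tree_vertices_def)
qed

lemma fin_level: "finite {w::bool list. length w = n}"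
proof -
  have "finite {xs::bool list. set xs \<subseteq> UNIV \<and> length xs = n}"
    by (rule finite_lists_length_eq) simp
  thus ?thesis by simp
qed

lemma aut_bij: "g \<in> tree_aut k \<Longrightarrow> bij_betw g (tree_vertices k) (tree_vertices k)"
  by (simp add: tree_aut_def Bij_def)

lemma aut_inj: "g \<in> tree_aut k \<Longrightarrow> inj_on g (tree_vertices k)"
  using aut_bij bij_betw_imp_inj_on by blast

lemma aut_len:
  assumes g: "g \<in> tree_aut k"
  shows "length v \<le> k \<Longrightarrow> length (g v) = length v"
proof (induction "length v" arbitrary: v rule: less_induct)
  case less
  have root: "g [] = []" and edge: "\<And>v w. v \<in> tree_vertices k \<Longrightarrow> w \<in> tree_vertices k \<Longrightarrow>
     tree_edge (g v) (g w) \<longleftrightarrow> tree_edge v w" using g by (auto simp: tree_aut_def)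
  show ?case
  proof (cases v rule: rev_cases)
    case Nil then show ?thesis using root by simp
  next
    case (snoc u b)
    have IHu: "length (g u) = length u" using less snoc by simp
    have uS: "u \<in> tree_vertices k" "u @ [b] \<in> tree_vertices k" using less snoc by (auto simp: tree_vertices_def)
    have "tree_edge (g u) (g (u @ [b]))" using edge[OF uS] by (auto simp: tree_edge_def)
    then obtain c where c: "g (u @ [b]) = g u @ [c] \<or> g u = g (u @ [b]) @ [c]"
      by (auto simp: tree_edge_def)
    show ?thesis
    proof (cases "g (u @ [b]) = g u @ [c]")
      case True then show ?thesis using IHu snoc by simp
    next
      case False
      hence c2: "g u = g (u @ [b]) @ [c]" using c by blast
      show ?thesis
      proof (cases u rule: rev_cases)
        case Nil then show ?thesis using c2 root by simp
      next
        case (snoc p a)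
        have IHp: "length (g p) = length p" using less snoc \<open>v = u @ [b]\<close> by simp
        have pS: "p \<in> tree_vertices k" using uS snoc by (auto simp: tree_vertices_def)
        have "tree_edge (g p) (g u)" using edge[OF pS uS(1)] snoc by (auto simp: tree_edge_def)
        then obtain d where "g u = g p @ [d] \<or> g p = g u @ [d]" by (auto simp: tree_edge_def)
        moreover have "g p \<noteq> g u @ [d]"
        proof
          assume "g p = g u @ [d]"
          hence "length (g p) = Suc (length (g u))" by simp
          thus False using IHp IHu snoc by simp
        qed
        ultimately have "g u = g p @ [d]" by blast
        with c2 have "g p = g (u @ [b])" by simp
        hence "p = u @ [b]" using inj_onD[OF aut_inj[OF g] _ pS uS(2)] by blast
        thus ?thesis using snoc by simp
      qed
    qed
  qed
qed

lemma aut_child: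
  assumes g: "g \<in> tree_aut k" and v: "length v < k"
  shows "\<exists>c. g (v @ [b]) = g v @ [c]"
proof -
  have uS: "v \<in> tree_vertices k" "v @ [b] \<in> tree_vertices k" using v by (auto simp: tree_vertices_def)
  have "tree_edge (g v) (g (v @ [b]))" using g uS by (auto simp: tree_edge_def tree_aut_def)
  then obtain c where c: "g (v @ [b]) = g v @ [c] \<or> g v = g (v @ [b]) @ [c]"
    by (auto simp: tree_edge_def)
  have "length (g v) = length v" "length (g (v@[b])) = Suc (length v)"
    using aut_len[OF g] v by auto
  moreover have "g v \<noteq> g (v @ [b]) @ [c]"
  proof
    assume "g v = g (v @ [b]) @ [c]"
    hence "length (g v) = Suc (length (g (v @ [b])))" by simp
    thus False using calculation by simp
  qed
  ultimately show ?thesis using c by blast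
qed

definition sflag :: "(bool list \<Rightarrow> bool list) \<Rightarrow> bool list \<Rightarrow> bool" where
  "sflag g v = (g (v @ [False]) \<noteq> g v @ [False])"

lemma aut_child_flag:
  assumes g: "g \<in> tree_aut k" and v: "length v < k"
  shows "g (v @ [c]) = g v @ [c \<noteq> sflag g v]"
proof -
  obtain c0 where c0: "g (v @ [False]) = g v @ [c0]" using aut_child[OF g v] by blast
  obtain c1 where c1: "g (v @ [True]) = g v @ [c1]" using aut_child[OF g v] by blast
  have S: "v @ [False] \<in> tree_vertices k" "v @ [True] \<in> tree_vertices k" using v by (auto simp: tree_vertices_def)
  have "g (v @ [False]) \<noteq> g (v @ [True])"
  proof
    assume "g (v @ [False]) = g (v @ [True])"
    hence "v @ [False] = v @ [True]" using inj_onD[OF aut_inj[OF g] _ S] by blast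
    thus False by simp
  qed
  hence "c0 \<noteq> c1" using c0 c1 by auto
  thus ?thesis using c0 c1 by (cases c; cases c0; cases c1; auto simp: sflag_def)
qed

lemma tree_autI:
  assumes f: "f \<in> Bij (tree_vertices k)" and root: "f [] = []"
    and ch: "\<And>v b. length v < k \<Longrightarrow> \<exists>c. f (v @ [b]) = f v @ [c]"
  shows "f \<in> tree_aut k"
proof -
  have len: "length v \<le> k \<Longrightarrow> length (f v) = length v" for v
  proof (induction v rule: rev_induct)
    case Nil then show ?case using root by simp
  next
    case (snoc b v)
    then obtain c where "f (v @ [b]) = f v @ [c]" using ch[of v b] by auto
    thus ?case using snoc by simp
  qed
  have inj: "inj_on f (tree_vertices k)" using f by (simp add: Bij_def bij_betw_def)
  have "tree_edge (f v) (f w) \<longleftrightarrow> tree_edge v w"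
    if vS: "v \<in> tree_vertices k" and wS: "w \<in> tree_vertices k" for v w
  proof
    assume "tree_edge v w"
    then obtain b where "w = v @ [b] \<or> v = w @ [b]" by (auto simp: tree_edge_def)
    thus "tree_edge (f v) (f w)"
    proof
      assume w: "w = v @ [b]"
      then have "length v < k" using wS by (auto simp: tree_vertices_def)
      then show ?thesis using ch[of v b] w by (auto simp: tree_edge_def)
    next
      assume w: "v = w @ [b]"
      then have "length w < k" using vS by (auto simp: tree_vertices_def)
      then show ?thesis using ch[of w b] w by (auto simp: tree_edge_def)
    qed
  next
    have key: "f y = f x @ [b] \<Longrightarrow> x \<in> tree_vertices k \<Longrightarrow> y \<in> tree_vertices k \<Longrightarrow> tree_edge x y" for x y b
    proof -
      assume e: "f y = f x @ [b]" and xS: "x \<in> tree_vertices k" and yS: "y \<in> tree_vertices k"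
      have "length y = Suc (length x)" using len[of x] len[of y] xS yS e by (simp add: tree_vertices_def)
      then obtain y0 a where y: "y = y0 @ [a]" by (auto simp: length_Suc_conv_rev)
      have y0: "length y0 < k" using yS y by (simp add: tree_vertices_def)
      obtain c where "f y = f y0 @ [c]" using ch[OF y0] y by blast
      hence "f y0 = f x" using e by simp
      moreover have "y0 \<in> tree_vertices k" using y0 by (simp add: tree_vertices_def)
      ultimately have "y0 = x" using inj_onD[OF inj _ _ xS] by blast
      thus ?thesis using y by (auto simp: tree_edge_def)
    qed
    assume "tree_edge (f v) (f w)"
    then obtain b where "f w = f v @ [b] \<or> f v = f w @ [b]" by (auto simp: tree_edge_def)
    thus "tree_edge v w"
    proof
      assume "f w = f v @ [b]" thus ?thesis using key vS wS by blast
    next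
      assume "f v = f w @ [b]" hence "tree_edge w v" using key vS wS by blast
      thus ?thesis by (auto simp: tree_edge_def)
    qed
  qed
  thus ?thesis using f root by (auto simp: tree_aut_def)
qed

lemma aut_compose:
  assumes g: "g \<in> tree_aut k" and f: "f \<in> tree_aut k"
  shows "compose (tree_vertices k) g f \<in> tree_aut k"
proof (rule tree_autI)
  show "compose (tree_vertices k) g f \<in> Bij (tree_vertices k)"
    using g f by (intro compose_Bij) (auto simp: tree_aut_def)
  have e: "[] \<in> tree_vertices k" by (simp add: tree_vertices_def)
  show "compose (tree_vertices k) g f [] = []" using g f e by (simp add: compose_def tree_aut_def)
  fix v :: "bool list" and b :: bool assume v: "length v < k"
  have vS: "v @ [b] \<in> tree_vertices k" using v by (simp add: tree_vertices_def)
  obtain c where c: "f (v @ [b]) = f v @ [c]" using aut_child[OF f v] by blast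
  have "length (f v) < k" using aut_len[OF f, of v] v by simp
  then obtain d where d: "g (f v @ [c]) = g (f v) @ [d]" using aut_child[OF g] by blast
  have "v \<in> tree_vertices k" using v by (simp add: tree_vertices_def)
  thus "\<exists>c. compose (tree_vertices k) g f (v @ [b]) = compose (tree_vertices k) g f v @ [c]"
    using vS c d by (simp add: compose_def)
qed

lemma aut_inv:
  assumes g: "g \<in> tree_aut k"
  shows "restrict (inv_into (tree_vertices k) g) (tree_vertices k) \<in> tree_aut k"
proof (rule tree_autI)
  let ?S = "tree_vertices k"
  have gB: "g \<in> Bij ?S" using g by (simp add: tree_aut_def)
  show "restrict (inv_into ?S g) ?S \<in> Bij ?S" using restrict_inv_into_Bij[OF gB] .
  have e: "[] \<in> ?S" by (simp add: tree_vertices_def)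
  have inj: "inj_on g ?S" using aut_inj[OF g] .
  have im: "g ` ?S = ?S" using aut_bij[OF g] by (simp add: bij_betw_def)
  have "inv_into ?S g (g []) = []" using inv_into_f_f[OF inj e] .
  thus "restrict (inv_into ?S g) ?S [] = []" using g e by (simp add: tree_aut_def)
  fix v :: "bool list" and b :: bool assume v: "length v < k"
  have vS: "v @ [b] \<in> ?S" "v \<in> ?S" using v by (auto simp: tree_vertices_def)
  define w where "w = inv_into ?S g (v @ [b])"
  have wS: "w \<in> ?S" unfolding w_def using vS im by (metis inv_into_into)
  have gw: "g w = v @ [b]" unfolding w_def using vS im by (simp add: f_inv_into_f)
  have "length w = Suc (length v)" using aut_len[OF g, of w] wS gw by (simp add: tree_vertices_def)
  then obtain w0 a where w: "w = w0 @ [a]" by (auto simp: length_Suc_conv_rev)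
  have w0: "length w0 < k" "w0 \<in> ?S" using wS w by (auto simp: tree_vertices_def)
  obtain c where "g w = g w0 @ [c]" using aut_child[OF g w0(1)] w by blast
  hence "g w0 = v" using gw by simp
  hence "inv_into ?S g v = w0" using inv_into_f_f[OF inj w0(2)] by simp
  thus "\<exists>c. restrict (inv_into ?S g) ?S (v @ [b]) = restrict (inv_into ?S g) ?S v @ [c]"
    using vS w w_def by auto
qed

lemma aut_level_bij:
  assumes g: "g \<in> tree_aut k" and j: "j \<le> k"
  shows "bij_betw g {w. length w = j} {w. length w = j}"
proof -
  have sub: "{w::bool list. length w = j} \<subseteq> tree_vertices k" using j by (auto simp: tree_vertices_def)
  have inj: "inj_on g {w. length w = j}" using inj_on_subset[OF aut_inj[OF g] sub] .
  have "g ` {w. length w = j} \<subseteq> {w. length w = j}" using aut_len[OF g] j by auto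
  hence "g ` {w. length w = j} = {w. length w = j}" using endo_inj_surj[OF fin_level _ inj] by blast
  thus ?thesis using inj by (simp add: bij_betw_def)
qed

lemma leaf_perm_permutes:
  assumes g: "g \<in> tree_aut k"
  shows "leaf_perm k g permutes tree_leaves k"
proof (rule bij_imp_permutes)
  have "bij_betw g (tree_leaves k) (tree_leaves k)"
    using aut_level_bij[OF g le_refl] by (simp add: tree_leaves_def)
  thus "bij_betw (leaf_perm k g) (tree_leaves k) (tree_leaves k)"
    by (rule bij_betw_cong[THEN iffD1, rotated]) (simp add: leaf_perm_def)
qed (simp add: leaf_perm_def)

lemma leaf_perm_permutation: "g \<in> tree_aut k \<Longrightarrow> permutation (leaf_perm k g)"
  using permutes_imp_permutation[OF _ leaf_perm_permutes] fin_level by (simp add: tree_leaves_def)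

lemma leaf_perm_compose:
  assumes g: "g \<in> tree_aut k" and f: "f \<in> tree_aut k"
  shows "leaf_perm k (compose (tree_vertices k) g f) = leaf_perm k g \<circ> leaf_perm k f"
proof
  fix w
  show "leaf_perm k (compose (tree_vertices k) g f) w = (leaf_perm k g \<circ> leaf_perm k f) w"
  proof (cases "w \<in> tree_leaves k")
    case True
    have "length (f w) = k" using aut_len[OF f, of w] True by (simp add: tree_leaves_def)
    thus ?thesis using True by (simp add: leaf_perm_def compose_def tree_leaves_def tree_vertices_def)
  qed (simp add: leaf_perm_def)
qed

definition Hset :: "nat \<Rightarrow> (bool list \<Rightarrow> bool list) set" where
  "Hset k = {g \<in> tree_aut k. evenperm (leaf_perm k g)}"

lemma G_group_eq: "G_group k = (BijGroup (tree_vertices k))\<lparr>carrier := Hset k\<rparr>"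
  by (simp add: G_group_def Hset_def)

lemma aut_Bij: "g \<in> tree_aut k \<Longrightarrow> g \<in> Bij (tree_vertices k)"
  by (simp add: tree_aut_def)

lemma Hset_subgroup: "subgroup (Hset k) (BijGroup (tree_vertices k))"
proof (rule subgroup.intro)
  let ?S = "tree_vertices k"
  show "Hset k \<subseteq> carrier (BijGroup ?S)" by (auto simp: Hset_def BijGroup_def tree_aut_def)
  show mc: "x \<otimes>\<^bsub>BijGroup ?S\<^esub> y \<in> Hset k" if "x \<in> Hset k" "y \<in> Hset k" for x y
  proof -
    have a: "x \<in> tree_aut k" "y \<in> tree_aut k" using that by (auto simp: Hset_def)
    have "x \<otimes>\<^bsub>BijGroup ?S\<^esub> y = compose ?S x y" using a by (simp add: BijGroup_def aut_Bij)
    moreover have "compose ?S x y \<in> tree_aut k" using aut_compose a by blast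
    moreover have "evenperm (leaf_perm k (compose ?S x y))"
      using that a by (simp add: leaf_perm_compose evenperm_comp leaf_perm_permutation Hset_def)
    ultimately show ?thesis by (simp add: Hset_def)
  qed
  have idt: "(\<lambda>x\<in>?S. x) \<in> tree_aut k"
    by (rule tree_autI) (auto simp: id_Bij tree_vertices_def)
  have lid: "leaf_perm k (\<lambda>x\<in>?S. x) = id"
    by (auto simp: leaf_perm_def tree_leaves_def tree_vertices_def)
  show "\<one>\<^bsub>BijGroup ?S\<^esub> \<in> Hset k" using idt lid by (simp add: BijGroup_def Hset_def)
  show "inv\<^bsub>BijGroup ?S\<^esub> x \<in> Hset k" if x: "x \<in> Hset k" for x
  proof -
    have a: "x \<in> tree_aut k" using x by (simp add: Hset_def)
    let ?y = "restrict (inv_into ?S x) ?S"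
    have iv: "inv\<^bsub>BijGroup ?S\<^esub> x = ?y" using inv_BijGroup[OF aut_Bij[OF a]] by simp
    have ya: "?y \<in> tree_aut k" using aut_inv[OF a] .
    have "compose ?S ?y x = (\<lambda>x\<in>?S. x)" using Bij_compose_restrict_eq[OF aut_Bij[OF a]] .
    hence "leaf_perm k ?y \<circ> leaf_perm k x = id" using leaf_perm_compose[OF ya a] lid by simp
    hence "evenperm (leaf_perm k ?y \<circ> leaf_perm k x)" by simp
    hence "evenperm (leaf_perm k ?y)" using x a ya by (simp add: evenperm_comp leaf_perm_permutation Hset_def)
    thus ?thesis using iv ya by (simp add: Hset_def)
  qed
qed

lemma G_group_group: "group (G_group k)"
  unfolding G_group_eq using group.subgroup_imp_group[OF group_BijGroup Hset_subgroup] .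

definition lift :: "(bool list \<Rightarrow> bool list) \<Rightarrow> nat \<Rightarrow> bool list \<Rightarrow> bool list" where
  "lift q n w = (if length w = Suc n then q (butlast w) @ [last w] else w)"

lemma lift_even:
  assumes "q permutes {u::bool list. length u = n}"
  shows "permutation (lift q n) \<and> evenperm (lift q n)"
  using assms fin_level
proof (induction rule: permutes_induct)
  case id
  have "lift (\<lambda>a. a) n = id"
  proof
    fix w :: "bool list"
    show "lift (\<lambda>a. a) n w = id w"
      by (cases "w = []") (auto simp: lift_def)
  qed
  thus ?case by (simp add: id_def[symmetric])
next
  case (swap a b p)
  let ?T = "Transposition.transpose (a @ [False]) (b @ [False]) \<circ> Transposition.transpose (a @ [True]) (b @ [True])"
  have la: "length a = n" "length b = n" using swap by auto
  have eq: "lift (Transposition.transpose a b \<circ> p) n = ?T \<circ> lift p n"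
  proof
    fix w :: "bool list"
    show "lift (Transposition.transpose a b \<circ> p) n w = (?T \<circ> lift p n) w"
    proof (cases "length w = Suc n")
      case True
      have "length (p (butlast w)) = n" using True permutes_in_image[OF \<open>p permutes {u. length u = n}\<close>] by simp
      then show ?thesis using True la \<open>a \<noteq> b\<close>
        by (cases "last w") (auto simp: lift_def Transposition.transpose_def)
    next
      case False
      then show ?thesis using la by (auto simp: lift_def Transposition.transpose_def)
    qed
  qed
  have pT: "permutation ?T" by (intro permutation_compose permutation_swap_id)
  have eT: "evenperm ?T" using \<open>a \<noteq> b\<close>
    by (simp add: evenperm_comp permutation_swap_id evenperm_swap)
  have IH: "permutation (lift p n)" "evenperm (lift p n)"
    using \<open>permutation (lift p n) \<and> evenperm (lift p n)\<close> by auto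
  have "permutation (?T \<circ> lift p n)" using permutation_compose[OF pT IH(1)] .
  moreover have "evenperm (?T \<circ> lift p n)" using evenperm_comp[OF pT IH(1)] eT IH(2) by blast
  ultimately show ?case unfolding eq by blast
qed

definition trunc :: "nat \<Rightarrow> nat \<Rightarrow> (bool list \<Rightarrow> bool list) \<Rightarrow> bool list \<Rightarrow> bool list" where
  "trunc k m g = restrict (\<lambda>w. g (take m w) @ drop m w) (tree_vertices k)"

lemma trunc_len:
  assumes g: "g \<in> tree_aut k" and w: "w \<in> tree_vertices k"
  shows "length (trunc k m g w) = length w"
proof -
  have "length (g (take m w)) = length (take m w)" using aut_len[OF g] w by (simp add: tree_vertices_def)
  thus ?thesis using w by (simp add: trunc_def)
qed

lemma trunc_aut:
  assumes g: "g \<in> tree_aut k"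
  shows "trunc k m g \<in> tree_aut k"
proof (rule tree_autI)
  let ?S = "tree_vertices k"
  have inj: "inj_on (trunc k m g) ?S"
  proof (rule inj_onI)
    fix x y assume x: "x \<in> ?S" and y: "y \<in> ?S" and e: "trunc k m g x = trunc k m g y"
    have "length x = length y" using trunc_len[OF g x, where m=m] trunc_len[OF g y, where m=m] e by simp
    moreover have tx: "take m x \<in> ?S" "take m y \<in> ?S" using x y by (auto simp: tree_vertices_def)
    ultimately have "length (g (take m x)) = length (g (take m y))"
      using aut_len[OF g] by (simp add: tree_vertices_def)
    moreover have "g (take m x) @ drop m x = g (take m y) @ drop m y" using e x y by (simp add: trunc_def)
    ultimately have "g (take m x) = g (take m y)" "drop m x = drop m y" by auto
    hence "take m x = take m y" "drop m x = drop m y" using inj_onD[OF aut_inj[OF g] _ tx] by auto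
    thus "x = y" by (metis append_take_drop_id)
  qed
  have "trunc k m g ` ?S \<subseteq> ?S" using trunc_len[OF g] by (auto simp: tree_vertices_def)
  hence "trunc k m g ` ?S = ?S" using endo_inj_surj[OF fin_vertices _ inj] by blast
  hence "bij_betw (trunc k m g) ?S ?S" using inj by (simp add: bij_betw_def)
  thus "trunc k m g \<in> Bij ?S" by (simp add: Bij_def trunc_def)
  show "trunc k m g [] = []" using g by (simp add: trunc_def tree_vertices_def tree_aut_def)
  fix v :: "bool list" and b :: bool assume v: "length v < k"
  have vS: "v \<in> ?S" "v @ [b] \<in> ?S" using v by (auto simp: tree_vertices_def)
  show "\<exists>c. trunc k m g (v @ [b]) = trunc k m g v @ [c]"
  proof (cases "m \<le> length v")
    case True
    then show ?thesis using vS by (simp add: trunc_def)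
  next
    case False
    obtain c where "g (v @ [b]) = g v @ [c]" using aut_child[OF g v] by blast
    then show ?thesis using vS False by (simp add: trunc_def)
  qed
qed

lemma trunc_T:
  assumes w: "w \<in> tree_vertices k"
  shows "trunc k m g w = trunc k m g (take m w) @ drop m w"
proof -
  have "take m w \<in> tree_vertices k" using w by (simp add: tree_vertices_def)
  thus ?thesis using w by (simp add: trunc_def)
qed

lemma trunc_even:
  assumes g: "g \<in> tree_aut k" and m: "m < k"
  shows "evenperm (leaf_perm k (trunc k m g))"
proof -
  obtain n where k: "k = Suc n" using m by (cases k) auto
  let ?h = "trunc k m g"
  have h: "?h \<in> tree_aut k" using trunc_aut[OF g] .
  define q where "q = (\<lambda>u::bool list. if length u = n then ?h u else u)"
  have "bij_betw ?h {u. length u = n} {u. length u = n}" using aut_level_bij[OF h] k by simp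
  hence "bij_betw q {u. length u = n} {u. length u = n}"
    by (rule bij_betw_cong[THEN iffD1, rotated]) (simp add: q_def)
  hence qp: "q permutes {u. length u = n}" by (rule bij_imp_permutes) (simp add: q_def)
  have "leaf_perm k ?h = lift q n"
  proof
    fix w :: "bool list"
    show "leaf_perm k ?h w = lift q n w"
    proof (cases "length w = Suc n")
      case True
      then obtain u c where w: "w = u @ [c]" and u: "length u = n" by (auto simp: length_Suc_conv_rev)
      have S: "u \<in> tree_vertices k" "u @ [c] \<in> tree_vertices k" using u k by (auto simp: tree_vertices_def)
      have "m \<le> length u" using u k m by simp
      hence "?h (u @ [c]) = ?h u @ [c]" using S by (simp add: trunc_def)
      thus ?thesis using w u k by (simp add: leaf_perm_def lift_def q_def tree_leaves_def)
    next
      case False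
      then show ?thesis using k by (simp add: leaf_perm_def lift_def tree_leaves_def)
    qed
  qed
  thus ?thesis using lift_even[OF qp] by simp
qed

definition flip :: "nat \<Rightarrow> nat \<Rightarrow> (bool list \<Rightarrow> bool list) \<Rightarrow> bool list \<Rightarrow> bool list" where
  "flip k m g = restrict (\<lambda>w. if m < length w then w[m := (w!m \<noteq> sflag g (take m w))] else w)
     (tree_vertices k)"

lemma flip_in: "w \<in> tree_vertices k \<Longrightarrow> flip k m g w \<in> tree_vertices k"
  by (simp add: flip_def tree_vertices_def)

lemma flip_flip:
  assumes w: "w \<in> tree_vertices k" shows "flip k m g (flip k m g w) = w"
proof -
  have fi: "flip k m g w \<in> tree_vertices k" using flip_in[OF w] .
  show ?thesis
  proof (cases "m < length w")
    case True
    define s where "s = sflag g (take m w)"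
    have fw: "flip k m g w = w[m := (w!m \<noteq> s)]" using w True by (simp add: flip_def s_def)
    have "flip k m g (w[m := (w!m \<noteq> s)]) = (w[m := (w!m \<noteq> s)])[m := ((w!m \<noteq> s) \<noteq> s)]"
      using fi True unfolding fw by (simp add: flip_def s_def)
    also have "\<dots> = w[m := w!m]" by (cases s) auto
    finally show ?thesis using fw by simp
  next
    case False
    then show ?thesis using w by (simp add: flip_def)
  qed
qed

lemma flip_Bij: "flip k m g \<in> Bij (tree_vertices k)"
proof -
  have "bij_betw (flip k m g) (tree_vertices k) (tree_vertices k)"
    by (rule bij_betw_byWitness[where f' = "flip k m g"]) (auto simp: flip_flip flip_in)
  thus ?thesis by (simp add: Bij_def flip_def)
qed

lemma flip_invol: "compose (tree_vertices k) (flip k m g) (flip k m g) = (\<lambda>x\<in>tree_vertices k. x)"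
  by (rule ext) (simp add: compose_def flip_flip)

lemma trunc_flip:
  assumes g: "g \<in> tree_aut k" and m: "m < k"
    and T: "\<forall>w\<in>tree_vertices k. g w = g (take (Suc m) w) @ drop (Suc m) w"
  shows "compose (tree_vertices k) (trunc k m g) (flip k m g) = g"
proof (rule extensionalityI)
  let ?S = "tree_vertices k"
  show "compose ?S (trunc k m g) (flip k m g) \<in> extensional ?S" by (rule compose_extensional)
  show "g \<in> extensional ?S" using g by (simp add: tree_aut_def Bij_def)
  fix w assume w: "w \<in> ?S"
  have fw: "flip k m g w \<in> ?S" using flip_in[OF w] .
  show "compose ?S (trunc k m g) (flip k m g) w = g w"
  proof (cases "m < length w")
    case False
    hence "flip k m g w = w" using w by (simp add: flip_def)
    moreover have "take m w = w" "drop m w = []" using False by auto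
    ultimately show ?thesis using w by (simp add: compose_def trunc_def)
  next
    case True
    define x where "x = (w!m \<noteq> sflag g (take m w))"
    have fl: "flip k m g w = take m w @ x # drop (Suc m) w"
      using w True by (simp add: flip_def x_def upd_conv_take_nth_drop)
    have lt: "length (take m w) = m" using True by simp
    have tr: "trunc k m g (flip k m g w) = g (take m w) @ x # drop (Suc m) w"
      using fw lt unfolding fl by (simp add: trunc_def)
    have "g w = g (take m w @ [w!m]) @ drop (Suc m) w" using T w True by (simp add: take_Suc_conv_app_nth)
    also have "g (take m w @ [w!m]) = g (take m w) @ [x]"
      unfolding x_def using aut_child_flag[OF g] lt m by simp
    finally show ?thesis using tr w by (simp add: compose_def)
  qed
qed

lemma carrier_G: "carrier (G_group k) = Hset k"
  by (simp add: G_group_def Hset_def)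

lemma mult_G: "x \<in> Bij (tree_vertices k) \<Longrightarrow> y \<in> Bij (tree_vertices k) \<Longrightarrow>
   x \<otimes>\<^bsub>G_group k\<^esub> y = compose (tree_vertices k) x y"
  by (simp add: G_group_def BijGroup_def)

lemma mult_B: "x \<in> Bij (tree_vertices k) \<Longrightarrow> y \<in> Bij (tree_vertices k) \<Longrightarrow>
   x \<otimes>\<^bsub>BijGroup (tree_vertices k)\<^esub> y = compose (tree_vertices k) x y"
  by (simp add: BijGroup_def)

lemma one_G: "\<one>\<^bsub>G_group k\<^esub> = (\<lambda>x\<in>tree_vertices k. x)"
  by (simp add: G_group_def BijGroup_def)

lemma Hset_aut: "g \<in> Hset k \<Longrightarrow> g \<in> tree_aut k"
  by (simp add: Hset_def)

lemma main_ind: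
  "m \<le> k \<Longrightarrow> g \<in> Hset k \<Longrightarrow> (\<forall>w\<in>tree_vertices k. g w = g (take m w) @ drop m w) \<Longrightarrow>
   g \<otimes>\<^bsub>G_group k\<^esub> g \<in> derived (G_group k) (carrier (G_group k))"
proof (induction m arbitrary: g)
  case 0
  let ?S = "tree_vertices k"
  have ga: "g \<in> tree_aut k" using 0 by (simp add: Hset_def)
  have "g = (\<lambda>x\<in>?S. x)"
  proof (rule extensionalityI)
    show "g \<in> extensional ?S" using ga by (simp add: tree_aut_def Bij_def)
    show "(\<lambda>x\<in>?S. x) \<in> extensional ?S" by simp
    fix w assume "w \<in> ?S"
    thus "g w = (\<lambda>x\<in>?S. x) w" using 0 ga by (simp add: tree_aut_def)
  qed
  hence g1: "g = \<one>\<^bsub>G_group k\<^esub>" by (simp add: one_G)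
  have "g \<otimes>\<^bsub>G_group k\<^esub> g = \<one>\<^bsub>G_group k\<^esub>"
    unfolding g1 using group.is_monoid[OF G_group_group] by (simp add: monoid.l_one)
  thus ?case unfolding derived_def by (simp add: generate.one)
next
  case (Suc m)
  let ?S = "tree_vertices k"
  let ?G = "G_group k"
  let ?B = "BijGroup ?S"
  have ga: "g \<in> tree_aut k" using Suc by (simp add: Hset_def)
  have m: "m < k" using Suc by simp
  define h where "h = trunc k m g"
  define E where "E = flip k m g"
  have ha: "h \<in> tree_aut k" unfolding h_def using trunc_aut[OF ga] .
  have hH: "h \<in> Hset k" unfolding h_def using trunc_aut[OF ga] trunc_even[OF ga m] by (simp add: Hset_def)
  have hT: "\<forall>w\<in>?S. h w = h (take m w) @ drop m w" unfolding h_def using trunc_T by blast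
  have hh: "h \<otimes>\<^bsub>?G\<^esub> h \<in> derived ?G (carrier ?G)" using Suc.IH[OF _ hH hT] m by simp
  have comp: "compose ?S h E = g" unfolding h_def E_def using trunc_flip[OF ga m] Suc.prems(3) by blast
  have hB: "h \<in> carrier ?B" "E \<in> carrier ?B" "g \<in> carrier ?B"
    using ha ga flip_Bij unfolding E_def by (auto simp: BijGroup_def aut_Bij)
  have "h \<otimes>\<^bsub>?B\<^esub> E = g" using comp hB by (simp add: BijGroup_def)
  hence "E = inv\<^bsub>?B\<^esub> h \<otimes>\<^bsub>?B\<^esub> g"
    using group.inv_solve_left[OF group_BijGroup hB(2) hB(1) hB(3)] by simp
  hence EH: "E \<in> Hset k"
    using subgroup.m_closed[OF Hset_subgroup subgroup.m_inv_closed[OF Hset_subgroup hH] Suc.prems(2)]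
    by simp
  have EE: "E \<otimes>\<^bsub>?G\<^esub> E = \<one>\<^bsub>?G\<^esub>"
    unfolding E_def using flip_Bij by (simp add: mult_G one_G flip_invol)
  have gE: "g = h \<otimes>\<^bsub>?G\<^esub> E" using comp hB by (simp add: mult_G BijGroup_def)
  show ?case unfolding gE
    using group.sq_lemma[OF G_group_group, of h k E] hH EH EE hh by (simp add: carrier_G)
qed

theorem proposition15:
  fixes k :: nat and g :: "bool list \<Rightarrow> bool list"
  assumes "k \<ge> 1" and "g \<in> carrier (G_group k)"
  shows "g [^]\<^bsub>G_group k\<^esub> (2::nat) \<in> derived (G_group k) (carrier (G_group k))"
proof -
  have gH: "g \<in> Hset k" using assms(2) by (simp add: carrier_G)
  have T: "\<forall>w\<in>tree_vertices k. g w = g (take k w) @ drop k w" by (simp add: tree_vertices_def)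
  have "g [^]\<^bsub>G_group k\<^esub> (2::nat) = g \<otimes>\<^bsub>G_group k\<^esub> g"
    using assms(2) group.is_monoid[OF G_group_group]
    by (simp add: numeral_2_eq_2 monoid.l_one)
  thus ?thesis using main_ind[OF le_refl gH T] by simp
qed

end
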